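(* In the setting described in the context, the number of solutions $x\in(\mathbb{R}^* )^n$ of the system $S$ equals $2^{\,n-1-\mathrm{rk}(\bar B)}$ times the number of nonzero real roots $r$ of the eliminant $f$ satisfying $$\Big(\tfrac{g_1(r)}{r^{l_1}}\Big)^{\epsilon_1}\cdots\Big(\tfrac{g_n(r)}{r^{l_n}}\Big)^{\epsilon_n}>0$$ for every $\epsilon=(\epsilon_1,\dots,\epsilon_n)\in\mathbb{Z}^n$ whose reduction modulo $2$ belongs to $\ker\bar B$.
   Context: A circuit is a set $\mathcal{C}\subset\mathbb{Z}^n$ of $n+2$ points whose affine span is $\mathbb{R}^n$. Let $\ell$ be a positive integer and $w_1,\dots,w_n\in\mathbb{Z}^n$ be such that $\mathcal{C}=\{0,\ell e_1,w_1,\dots,w_n\}$ is a circuit. Write $w_i=l_ie_1+v_i$ with $l_i\in\mathbb{Z}$ and $v_i\in\{0\}\times\mathbb{Z}^{n-1}\cong\mathbb{Z}^{n-1}$. For $i=1,\dots,n$ let $g_i(x)=a_i+b_ix^{\ell}$ with $a_i,b_i$ nonzero real numbers, such that no two of the $g_i$ have a common complex root. The system $S$ is $x^{w_i}=g_i(x_1)$, $i=1,\dots,n$, where $x=(x_1,\dots,x_n)$ and $x^{w}=x_1^{w^1}\cdots x_n^{w^n}$. After reordering $w_1,\dots,w_n$, the (unique up to sign) primitive integer linear relation among $e_1,w_1,\dots,w_n$ is written $\lambda_0e_1+\sum_{i=1}^{t}\lambda_iw_i=\sum_{i=t+1}^{\nu}\lambda_iw_i$ with $1\le\nu\le n$,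 $0\le t\le\nu$, $\lambda_0,\dots,\lambda_\nu$ coprime integers, $\lambda_0\ge0$ and $\lambda_1,\dots,\lambda_\nu>0$. The eliminant of $S$ is $f(x)=x^{\lambda_0}\prod_{i=1}^{t}g_i(x)^{\lambda_i}-\prod_{i=t+1}^{\nu}g_i(x)^{\lambda_i}$. $\bar B\in M_{n-1,n}(\mathbb{Z}/2)$ is the matrix whose $i$-th column is the reduction modulo $2$ of $v_i$, and $\mathrm{rk}(\bar B)$ its rank over $\mathbb{Z}/2$. *)

theory Defs
  imports Complex_Main "Jordan_Normal_Form.DL_Rank" "HOL-Library.Z2"
begin

text \<open>Points of Z^n are represented as functions nat => int, only the coordinates
  1..n being relevant.\<close>

definition circuit :: "nat \<Rightarrow> (nat \<Rightarrow> nat \<Rightarrow> int) \<Rightarrow> bool" where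
  "circuit n P \<longleftrightarrow>
     inj_on (\<lambda>k. restrict (P k) {1..n}) {0..n+1} \<and>
     (\<forall>y::nat \<Rightarrow> real. \<exists>c::nat \<Rightarrow> real.
        (\<Sum>k=0..n+1. c k) = 1 \<and>
        (\<forall>j\<in>{1..n}. y j = (\<Sum>k=0..n+1. c k * of_int (P k j))))"

definition circ_pts :: "nat \<Rightarrow> (nat \<Rightarrow> nat \<Rightarrow> int) \<Rightarrow> nat \<Rightarrow> nat \<Rightarrow> int" where
  "circ_pts l w k = (if k = 0 then (\<lambda>j. 0)
                     else if k = 1 then (\<lambda>j. if j = 1 then int l else 0)
                     else w (k - 1))"

definition monom_int :: "nat \<Rightarrow> (nat \<Rightarrow> int) \<Rightarrow> (nat \<Rightarrow> real) \<Rightarrow> real" where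
  "monom_int n w x = (\<Prod>j\<in>{1..n}. x j powi w j)"

definition gpol :: "nat \<Rightarrow> real \<Rightarrow> real \<Rightarrow> real \<Rightarrow> real" where
  "gpol l a b x = a + b * x ^ l"

text \<open>The primitive relation is given as mu 0 * e_1 + sum_i mu i * w_i = 0 with
  mu 0 >= 0; the indices with mu i > 0 are those on the left-hand side
  (i = 1..t), those with mu i < 0 the right-hand side (i = t+1..nu), lambda_i = |mu i|.\<close>
definition eliminant :: "nat \<Rightarrow> nat \<Rightarrow> (nat \<Rightarrow> real) \<Rightarrow> (nat \<Rightarrow> real) \<Rightarrow> (nat \<Rightarrow> int) \<Rightarrow> real \<Rightarrow> real" where
  "eliminant n l a b mu x =
     x ^ nat (mu 0) * (\<Prod>i\<in>{i\<in>{1..n}. mu i > 0}. gpol l (a i) (b i) x ^ nat (mu i))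
     - (\<Prod>i\<in>{i\<in>{1..n}. mu i < 0}. gpol l (a i) (b i) x ^ nat (- mu i))"

text \<open>The matrix B-bar over Z/2 (n-1 rows, n columns); column i (0-based) is v_(i+1) mod 2,
  row j (0-based) corresponds to coordinate j+2.\<close>
definition Bbar :: "nat \<Rightarrow> (nat \<Rightarrow> nat \<Rightarrow> int) \<Rightarrow> bit mat" where
  "Bbar n w = mat (n - 1) n (\<lambda>(j, i). of_int (w (i + 1) (j + 2)))"

definition rank2 :: "nat \<Rightarrow> bit mat \<Rightarrow> nat" where
  "rank2 m A = vec_space.rank m A"

end

theory Submission
  imports Defs
begin

lemma (in vectorspace) card_carrier_dim:
  assumes fd: fin_dim and fK: "finite (carrier K)"
  shows "card (carrier V) = card (carrier K) ^ dim"
proof -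
  obtain \<beta> where fb: "finite \<beta>" and b: "basis \<beta>" using finite_basis_exists[OF fd] by blast
  have dimb: "dim = card \<beta>" using dim_basis[OF fb b] .
  have bC: "\<beta> \<subseteq> carrier V" and li: "lin_indpt \<beta>" and gen: "span \<beta> = carrier V"
    using b unfolding basis_def by auto
  let ?P = "PiE \<beta> (\<lambda>_. carrier K)"
  have "bij_betw (\<lambda>a. lincomb a \<beta>) ?P (carrier V)"
  proof (rule bij_betwI')
    fix a c assume a: "a \<in> ?P" and c: "c \<in> ?P"
    show "(lincomb a \<beta> = lincomb c \<beta>) = (a = c)"
    proof
      assume eq: "lincomb a \<beta> = lincomb c \<beta>"
      have aK: "a \<in> \<beta> \<rightarrow> carrier K" and cK: "c \<in> \<beta> \<rightarrow> carrier K" using a c by auto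
      have "lincomb (\<lambda>v. a v \<ominus>\<^bsub>K\<^esub> c v) \<beta> = \<zero>\<^bsub>V\<^esub>"
        using lincomb_diff[OF fb bC aK cK] eq lincomb_closed[OF bC aK] by simp
      moreover have "(\<lambda>v. a v \<ominus>\<^bsub>K\<^esub> c v) \<in> \<beta> \<rightarrow> carrier K" using aK cK by auto
      ultimately have "\<forall>v\<in>\<beta>. a v \<ominus>\<^bsub>K\<^esub> c v = \<zero>\<^bsub>K\<^esub>"
        using li lin_dep_crit[OF fb order_refl] by blast
      hence "\<forall>v\<in>\<beta>. a v = c v" using aK cK by (auto simp add: Pi_iff module.R.minus_other_side)
      thus "a = c" using a c by (auto intro: extensionalityI[of _ \<beta>] simp: PiE_def)
    qed simp
  next
    fix a assume "a \<in> ?P" thus "lincomb a \<beta> \<in> carrier V" using bC by (intro lincomb_closed) auto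
  next
    fix v assume "v \<in> carrier V"
    then obtain a where a: "a \<in> \<beta> \<rightarrow> carrier K" and v: "v = lincomb a \<beta>"
    proof -
      have "v \<in> {lincomb a \<beta> |a. a \<in> \<beta> \<rightarrow> carrier K}" using gen finite_span[OF fb bC] \<open>v \<in> carrier V\<close> by simp
      thus ?thesis using that by blast
    qed
    show "\<exists>a\<in>?P. v = lincomb a \<beta>"
      by (rule bexI[of _ "restrict a \<beta>"]) (use a v bC in \<open>auto intro!: lincomb_cong\<close>)
  qed
  hence "card (carrier V) = card ?P" by (simp add: bij_betw_same_card)
  also have "\<dots> = card (carrier K) ^ card \<beta>" using fb by (simp add: card_PiE)
  finally show ?thesis using dimb by simp
qed


lemma UNIV_bit: "(UNIV :: bit set) = {0, 1}" by auto
lemma card_UNIV_bit: "card (UNIV :: bit set) = 2" unfolding UNIV_bit by simp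

lemma card_col_space:
  fixes B :: "bit mat"
  assumes B: "B \<in> carrier_mat m n"
  shows "card {B *\<^sub>v x | x. x \<in> carrier_vec n} = 2 ^ vec_space.rank m B"
proof -
  interpret vec_space "TYPE(bit)" m .
  have sub: "set (cols B) \<subseteq> carrier_vec m" using B cols_dim by (metis carrier_matD(1))
  have vs: "vectorspace class_ring (vs (span (set (cols B))))"
    using sub span_is_subspace subspace_def subspace_is_vs by simp
  have fd: "vectorspace.fin_dim class_ring (vs (span (set (cols B))))" using fin_dim_span_cols[OF B] .
  have "card (carrier (vs (span (set (cols B))))) = card (carrier (class_ring :: bit ring)) ^ rank B"
    unfolding rank_def using vectorspace.card_carrier_dim[OF vs fd] by (simp add: UNIV_bit)
  moreover have "carrier (vs (span (set (cols B)))) = {B *\<^sub>v x | x. x \<in> carrier_vec n}"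
    using col_space_eq[OF B] B unfolding col_space_def by auto
  ultimately show ?thesis by (simp add: card_UNIV_bit)
qed

lemma bit_add_self[simp]: "(x::bit) + x = 0" by (cases x) auto

lemma bitvec_add_self: "(v :: bit vec) \<in> carrier_vec k \<Longrightarrow> v + v = 0\<^sub>v k"
  by (intro eq_vecI) auto

lemma card_carrier_vec_bit: "card (carrier_vec k :: bit vec set) = 2 ^ k"
proof -
  have "bij_betw (\<lambda>f. vec k f) (PiE {..<k} (\<lambda>_. UNIV :: bit set)) (carrier_vec k)"
  proof (rule bij_betwI')
    fix f g assume f: "f \<in> PiE {..<k} (\<lambda>_. UNIV :: bit set)" and g: "g \<in> PiE {..<k} (\<lambda>_. UNIV :: bit set)"
    show "(vec k f = vec k g) = (f = g)"
    proof
      assume "vec k f = vec k g"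
      hence "\<forall>i<k. f i = g i" by (metis index_vec)
      thus "f = g" using f g by (auto intro: extensionalityI[of _ "{..<k}"] simp: PiE_def)
    qed simp
  next
    fix f show "vec k f \<in> carrier_vec k" by simp
  next
    fix v :: "bit vec" assume v: "v \<in> carrier_vec k"
    show "\<exists>f\<in>PiE {..<k} (\<lambda>_. UNIV). v = vec k f"
      by (rule bexI[of _ "restrict (\<lambda>i. v $ i) {..<k}"]) (use v in \<open>auto intro!: eq_vecI\<close>)
  qed
  hence "card (carrier_vec k :: bit vec set) = card (PiE {..<k} (\<lambda>_. UNIV :: bit set))"
    by (simp add: bij_betw_same_card)
  thus ?thesis by (simp add: card_PiE card_UNIV_bit)
qed

lemma finite_carrier_vec_bit: "finite (carrier_vec k :: bit vec set)"
  using card_carrier_vec_bit[of k] by (metis card.infinite power_not_zero zero_neq_numeral)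

definition sg :: "bit \<Rightarrow> int" where "sg b = (if b = 0 then 1 else -1)"

lemma sg_add1: "sg (b + 1) = - sg b" by (cases b) (auto simp: sg_def)

lemma char_sum_zero:
  fixes W :: "bit vec set" and \<phi> :: "bit vec \<Rightarrow> bit"
  assumes W: "W \<subseteq> carrier_vec k" and addW: "\<And>u v. u \<in> W \<Longrightarrow> v \<in> W \<Longrightarrow> u + v \<in> W"
    and phi: "\<And>u v. u \<in> W \<Longrightarrow> v \<in> W \<Longrightarrow> \<phi> (u + v) = \<phi> u + \<phi> v"
    and w0: "w0 \<in> W" "\<phi> w0 = 1"
  shows "(\<Sum>w\<in>W. sg (\<phi> w)) = 0"
proof -
  have bij: "bij_betw (\<lambda>w. w + w0) W W"
  proof (rule bij_betwI[where g = "\<lambda>w. w + w0"])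
    show "(\<lambda>w. w + w0) \<in> W \<rightarrow> W" using addW w0 by auto
    show "(\<lambda>w. w + w0) \<in> W \<rightarrow> W" using addW w0 by auto
    fix x assume x: "x \<in> W"
    have "x + w0 + w0 = x + (w0 + w0)" using x w0 W by (intro assoc_add_vec) auto
    also have "\<dots> = x"
    proof -
      have "w0 \<in> carrier_vec k" "x \<in> carrier_vec k" using x w0 W by auto
      thus ?thesis using bitvec_add_self[of w0 k] by simp
    qed
    finally show "x + w0 + w0 = x" .
    thus "x + w0 + w0 = x" .
  qed
  have "(\<Sum>w\<in>W. sg (\<phi> w)) = (\<Sum>w\<in>W. sg (\<phi> (w + w0)))"
    using sum.reindex_bij_betw[OF bij, of "\<lambda>w. sg (\<phi> w)"] by simp
  also have "\<dots> = (\<Sum>w\<in>W. - sg (\<phi> w))"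
    using phi w0 by (intro sum.cong refl) (metis sg_add1)
  also have "\<dots> = - (\<Sum>w\<in>W. sg (\<phi> w))" by (simp add: sum_negf)
  finally show ?thesis by simp
qed

definition perp :: "nat \<Rightarrow> bit vec set \<Rightarrow> bit vec set" where
  "perp k W = {s \<in> carrier_vec k. \<forall>w\<in>W. s \<bullet> w = 0}"

lemma unit_vec_scalar: "j < k \<Longrightarrow> (w :: bit vec) \<in> carrier_vec k \<Longrightarrow> unit_vec k j \<bullet> w = w $ j"
  by (rule scalar_prod_left_unit)

lemma perp_all_zero:
  assumes u: "(u :: bit vec) \<in> carrier_vec k" and h: "\<And>s. s \<in> carrier_vec k \<Longrightarrow> s \<bullet> u = 0"
  shows "u = 0\<^sub>v k"
proof (rule eq_vecI)
  fix j assume "j < dim_vec (0\<^sub>v k :: bit vec)"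
  hence j: "j < k" by simp
  have "unit_vec k j \<bullet> u = 0" using h[of "unit_vec k j"] j by simp
  thus "u $ j = 0\<^sub>v k $ j" using j u unit_vec_scalar by simp
qed (use u in simp)

lemma card_perp:
  fixes W :: "bit vec set"
  assumes W: "W \<subseteq> carrier_vec k" and addW: "\<And>u v. u \<in> W \<Longrightarrow> v \<in> W \<Longrightarrow> u + v \<in> W"
    and zW: "0\<^sub>v k \<in> W"
  shows "card W * card (perp k W) = 2 ^ k"
proof -
  let ?C = "carrier_vec k :: bit vec set"
  have fC: "finite ?C" by (rule finite_carrier_vec_bit)
  have fW: "finite W" using W fC finite_subset by blast
  have fP: "finite (perp k W)" using fC unfolding perp_def by auto
  have inner1: "(\<Sum>w\<in>W. sg (s \<bullet> w)) = (if s \<in> perp k W then int (card W) else 0)"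
    if s: "s \<in> ?C" for s
  proof (cases "s \<in> perp k W")
    case True thus ?thesis unfolding perp_def by (simp add: sg_def)
  next
    case False
    then obtain w0 where w0: "w0 \<in> W" "s \<bullet> w0 \<noteq> 0" using s unfolding perp_def by auto
    have "(\<Sum>w\<in>W. sg (s \<bullet> w)) = 0"
    proof (rule char_sum_zero[OF W addW, of "\<lambda>w. s \<bullet> w" w0])
      fix u v assume "u \<in> W" "v \<in> W"
      thus "s \<bullet> (u + v) = s \<bullet> u + s \<bullet> v" using W s by (intro scalar_prod_add_distrib) auto
    qed (use w0 in auto)
    thus ?thesis using False by simp
  qed
  have inner2: "(\<Sum>s\<in>?C. sg (s \<bullet> w)) = (if w = 0\<^sub>v k then 2 ^ k else 0)"
    if w: "w \<in> W" for w
  proof (cases "w = 0\<^sub>v k")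
    case True
    have "(\<Sum>s\<in>?C. sg (s \<bullet> w)) = (\<Sum>s\<in>?C. 1)" using True by (intro sum.cong) (auto simp: sg_def)
    thus ?thesis using True card_carrier_vec_bit[of k] by simp
  next
    case False
    have wC: "w \<in> ?C" using w W by auto
    obtain j where j: "j < k" "w $ j \<noteq> 0"
      using False wC by (metis carrier_vecD eq_vecI index_zero_vec(1,2))
    have "(\<Sum>s\<in>?C. sg (s \<bullet> w)) = 0"
    proof (rule char_sum_zero[of ?C k, of "\<lambda>s. s \<bullet> w" "unit_vec k j"])
      fix u v assume "u \<in> ?C" "v \<in> ?C"
      thus "(u + v) \<bullet> w = u \<bullet> w + v \<bullet> w" using wC by (intro add_scalar_prod_distrib) auto
    qed (use j wC unit_vec_scalar in auto)
    thus ?thesis using False by simp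
  qed
  have "(\<Sum>s\<in>?C. \<Sum>w\<in>W. sg (s \<bullet> w)) = (\<Sum>s\<in>?C. if s \<in> perp k W then int (card W) else 0)"
    using inner1 by (intro sum.cong) auto
  also have "\<dots> = int (card W) * int (card (perp k W))"
  proof -
    have "perp k W \<subseteq> ?C" unfolding perp_def by auto
    hence "(\<Sum>s\<in>?C. if s \<in> perp k W then int (card W) else 0) = (\<Sum>s\<in>perp k W. int (card W))"
      using fC by (simp add: sum.If_cases Int_absorb1 Int_commute)
    thus ?thesis by simp
  qed
  finally have e1: "(\<Sum>s\<in>?C. \<Sum>w\<in>W. sg (s \<bullet> w)) = int (card W) * int (card (perp k W))" .
  have "(\<Sum>s\<in>?C. \<Sum>w\<in>W. sg (s \<bullet> w)) = (\<Sum>w\<in>W. \<Sum>s\<in>?C. sg (s \<bullet> w))" by (rule sum.swap)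
  also have "\<dots> = (\<Sum>w\<in>W. if w = 0\<^sub>v k then 2 ^ k else 0)" using inner2 by (intro sum.cong) auto
  also have "\<dots> = 2 ^ k" using fW zW by (simp add: sum.delta)
  finally show ?thesis using e1 by (metis of_nat_eq_of_nat_power_cancel_iff of_nat_mult numeral_power_eq_of_nat_cancel_iff)
qed

lemma ker_eq_perp:
  fixes A :: "bit mat"
  assumes A: "A \<in> carrier_mat p q"
  shows "{x \<in> carrier_vec q. A *\<^sub>v x = 0\<^sub>v p} = perp q {A\<^sup>T *\<^sub>v y | y. y \<in> carrier_vec p}"
proof (intro Set.set_eqI iffI)
  fix x assume "x \<in> {x \<in> carrier_vec q. A *\<^sub>v x = 0\<^sub>v p}"
  hence x: "x \<in> carrier_vec q" "A *\<^sub>v x = 0\<^sub>v p" by auto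
  show "x \<in> perp q {A\<^sup>T *\<^sub>v y | y. y \<in> carrier_vec p}"
    unfolding perp_def
  proof (intro CollectI conjI ballI x(1))
    fix w assume "w \<in> {A\<^sup>T *\<^sub>v y | y. y \<in> carrier_vec p}"
    then obtain y where y: "y \<in> carrier_vec p" "w = A\<^sup>T *\<^sub>v y" by auto
    have "x \<bullet> w = w \<bullet> x" using x y A by (intro comm_scalar_prod[of _ q]) auto
    also have "\<dots> = y \<bullet> (A *\<^sub>v x)" using y x A transpose_vec_mult_scalar by metis
    also have "\<dots> = 0" using x y by simp
    finally show "x \<bullet> w = 0" .
  qed
next
  fix x assume "x \<in> perp q {A\<^sup>T *\<^sub>v y | y. y \<in> carrier_vec p}"
  hence x: "x \<in> carrier_vec q" and h: "\<And>y. y \<in> carrier_vec p \<Longrightarrow> x \<bullet> (A\<^sup>T *\<^sub>v y) = 0"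
    unfolding perp_def by auto
  have "A *\<^sub>v x = 0\<^sub>v p"
  proof (rule perp_all_zero)
    show "A *\<^sub>v x \<in> carrier_vec p" using A x by simp
    fix y :: "bit vec" assume y: "y \<in> carrier_vec p"
    have "y \<bullet> (A *\<^sub>v x) = (A\<^sup>T *\<^sub>v y) \<bullet> x" using y x A transpose_vec_mult_scalar by metis
    also have "\<dots> = x \<bullet> (A\<^sup>T *\<^sub>v y)" using x y A by (intro comm_scalar_prod[of _ q]) auto
    finally show "y \<bullet> (A *\<^sub>v x) = 0" using h[OF y] by simp
  qed
  thus "x \<in> {x \<in> carrier_vec q. A *\<^sub>v x = 0\<^sub>v p}" using x by simp
qed

lemma image_closed:
  fixes A :: "bit mat"
  assumes A: "A \<in> carrier_mat p q"
  shows "{A *\<^sub>v x | x. x \<in> carrier_vec q} \<subseteq> carrier_vec p"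
    and "\<And>u v. u \<in> {A *\<^sub>v x | x. x \<in> carrier_vec q} \<Longrightarrow> v \<in> {A *\<^sub>v x | x. x \<in> carrier_vec q}
          \<Longrightarrow> u + v \<in> {A *\<^sub>v x | x. x \<in> carrier_vec q}"
    and "0\<^sub>v p \<in> {A *\<^sub>v x | x. x \<in> carrier_vec q}"
proof -
  show "{A *\<^sub>v x | x. x \<in> carrier_vec q} \<subseteq> carrier_vec p" using A by auto
  fix u v assume "u \<in> {A *\<^sub>v x | x. x \<in> carrier_vec q}" "v \<in> {A *\<^sub>v x | x. x \<in> carrier_vec q}"
  then obtain x y where xy: "x \<in> carrier_vec q" "y \<in> carrier_vec q" "u = A *\<^sub>v x" "v = A *\<^sub>v y" by auto
  have "A *\<^sub>v (x + y) = A *\<^sub>v x + A *\<^sub>v y" using A xy by (intro mult_add_distrib_mat_vec) auto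
  thus "u + v \<in> {A *\<^sub>v x | x. x \<in> carrier_vec q}" using xy by (intro CollectI exI[of _ "x + y"]) auto
next
  show "0\<^sub>v p \<in> {A *\<^sub>v x | x. x \<in> carrier_vec q}" using A
    by (intro CollectI exI[of _ "0\<^sub>v q"]) auto
qed

lemma kernel_closed:
  fixes A :: "bit mat"
  assumes A: "A \<in> carrier_mat p q"
  shows "{x \<in> carrier_vec q. A *\<^sub>v x = 0\<^sub>v p} \<subseteq> carrier_vec q"
    and "\<And>u v. u \<in> {x \<in> carrier_vec q. A *\<^sub>v x = 0\<^sub>v p} \<Longrightarrow> v \<in> {x \<in> carrier_vec q. A *\<^sub>v x = 0\<^sub>v p}
          \<Longrightarrow> u + v \<in> {x \<in> carrier_vec q. A *\<^sub>v x = 0\<^sub>v p}"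
    and "0\<^sub>v q \<in> {x \<in> carrier_vec q. A *\<^sub>v x = 0\<^sub>v p}"
proof -
  show "{x \<in> carrier_vec q. A *\<^sub>v x = 0\<^sub>v p} \<subseteq> carrier_vec q" by auto
  fix u v assume "u \<in> {x \<in> carrier_vec q. A *\<^sub>v x = 0\<^sub>v p}" "v \<in> {x \<in> carrier_vec q. A *\<^sub>v x = 0\<^sub>v p}"
  hence uv: "u \<in> carrier_vec q" "v \<in> carrier_vec q" "A *\<^sub>v u = 0\<^sub>v p" "A *\<^sub>v v = 0\<^sub>v p" by auto
  have "A *\<^sub>v (u + v) = A *\<^sub>v u + A *\<^sub>v v" using A uv by (intro mult_add_distrib_mat_vec) auto
  thus "u + v \<in> {x \<in> carrier_vec q. A *\<^sub>v x = 0\<^sub>v p}" using uv by auto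
next
  show "0\<^sub>v q \<in> {x \<in> carrier_vec q. A *\<^sub>v x = 0\<^sub>v p}" using A by auto
qed

lemma G1:
  fixes B :: "bit mat"
  assumes B: "B \<in> carrier_mat m n"
  shows "card {s \<in> carrier_vec m. B\<^sup>T *\<^sub>v s = 0\<^sub>v n} = 2 ^ (m - vec_space.rank m B)"
proof -
  have Bt: "B\<^sup>T \<in> carrier_mat n m" using B by simp
  have e: "{s \<in> carrier_vec m. B\<^sup>T *\<^sub>v s = 0\<^sub>v n} = perp m {B *\<^sub>v y | y. y \<in> carrier_vec n}"
    using ker_eq_perp[OF Bt] by simp
  have "card {B *\<^sub>v y | y. y \<in> carrier_vec n} * card (perp m {B *\<^sub>v y | y. y \<in> carrier_vec n}) = 2 ^ m"
    using card_perp image_closed[OF B] by blast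
  hence "2 ^ vec_space.rank m B * card {s \<in> carrier_vec m. B\<^sup>T *\<^sub>v s = 0\<^sub>v n} = (2::nat) ^ m"
    using e card_col_space[OF B] by simp
  moreover have "card {s \<in> carrier_vec m. B\<^sup>T *\<^sub>v s = 0\<^sub>v n} \<ge> 1"
  proof -
    have "finite {s \<in> carrier_vec m. B\<^sup>T *\<^sub>v s = 0\<^sub>v n}"
      using finite_carrier_vec_bit[of m] by (rule finite_subset[rotated]) auto
    moreover have "0\<^sub>v m \<in> {s \<in> carrier_vec m. B\<^sup>T *\<^sub>v s = 0\<^sub>v n}" using Bt by auto
    ultimately show ?thesis by (metis card_0_eq empty_iff less_one not_less)
  qed
  ultimately show ?thesis
  proof -
    assume h: "2 ^ vec_space.rank m B * card {s \<in> carrier_vec m. B\<^sup>T *\<^sub>v s = 0\<^sub>v n} = (2::nat) ^ m"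
      and c: "card {s \<in> carrier_vec m. B\<^sup>T *\<^sub>v s = 0\<^sub>v n} \<ge> 1"
    have "(2::nat) ^ vec_space.rank m B * 1 \<le> 2 ^ vec_space.rank m B * card {s \<in> carrier_vec m. B\<^sup>T *\<^sub>v s = 0\<^sub>v n}"
      using c by (intro mult_le_mono2)
    hence "(2::nat) ^ vec_space.rank m B \<le> 2 ^ m" using h by simp
    hence le: "vec_space.rank m B \<le> m" by simp
    have "(2::nat) ^ m = 2 ^ vec_space.rank m B * 2 ^ (m - vec_space.rank m B)"
      using le by (simp flip: power_add)
    hence "(2::nat) ^ vec_space.rank m B * card {s \<in> carrier_vec m. B\<^sup>T *\<^sub>v s = 0\<^sub>v n}
       = 2 ^ vec_space.rank m B * 2 ^ (m - vec_space.rank m B)" using h by linarith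
    thus ?thesis by (subst (asm) mult_left_cancel) auto
  qed
qed

lemma G2:
  fixes B :: "bit mat"
  assumes B: "B \<in> carrier_mat m n" and \<sigma>: "\<sigma> \<in> carrier_vec n"
  shows "(\<exists>s \<in> carrier_vec m. B\<^sup>T *\<^sub>v s = \<sigma>) \<longleftrightarrow> (\<forall>\<epsilon> \<in> carrier_vec n. B *\<^sub>v \<epsilon> = 0\<^sub>v m \<longrightarrow> \<sigma> \<bullet> \<epsilon> = 0)"
proof -
  have Bt: "B\<^sup>T \<in> carrier_mat n m" using B by simp
  let ?I = "{B\<^sup>T *\<^sub>v y | y. y \<in> carrier_vec m}"
  let ?K = "{x \<in> carrier_vec n. B *\<^sub>v x = 0\<^sub>v m}"
  have eK: "?K = perp n ?I" using ker_eq_perp[OF B] .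
  have c1: "card ?I * card ?K = 2 ^ n" unfolding eK using card_perp image_closed[OF Bt] by blast
  have c2: "card ?K * card (perp n ?K) = 2 ^ n" using card_perp kernel_closed[OF B] by blast
  have pos: "card ?K > 0"
  proof -
    have "finite ?K" using finite_carrier_vec_bit[of n] by (rule finite_subset[rotated]) auto
    moreover have "0\<^sub>v n \<in> ?K" using B by auto
    ultimately show ?thesis by (metis card_gt_0_iff empty_iff)
  qed
  have "card ?I * card ?K = card (perp n ?K) * card ?K" using c1 c2 by (simp add: mult.commute)
  hence ceq: "card ?I = card (perp n ?K)" using pos by (subst (asm) mult_right_cancel) auto
  have sub: "?I \<subseteq> perp n ?K"
  proof
    fix v assume "v \<in> ?I"
    then obtain y where y: "y \<in> carrier_vec m" "v = B\<^sup>T *\<^sub>v y" by auto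
    have "v \<bullet> x = 0" if x: "x \<in> ?K" for x
    proof -
      have "v \<bullet> x = y \<bullet> (B *\<^sub>v x)" using y x B transpose_vec_mult_scalar by blast
      thus ?thesis using x y by simp
    qed
    thus "v \<in> perp n ?K" unfolding perp_def using y B by auto
  qed
  have fin: "finite (perp n ?K)" using finite_carrier_vec_bit[of n] by (rule finite_subset[rotated]) (auto simp: perp_def)
  have eq: "?I = perp n ?K" using card_subset_eq[OF fin sub ceq] .
  show ?thesis
  proof -
    have "(\<exists>s \<in> carrier_vec m. B\<^sup>T *\<^sub>v s = \<sigma>) \<longleftrightarrow> \<sigma> \<in> ?I" by auto
    also have "\<dots> \<longleftrightarrow> \<sigma> \<in> perp n ?K" using eq by simp
    also have "\<dots> \<longleftrightarrow> (\<forall>\<epsilon> \<in> carrier_vec n. B *\<^sub>v \<epsilon> = 0\<^sub>v m \<longrightarrow> \<sigma> \<bullet> \<epsilon> = 0)"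
      unfolding perp_def using \<sigma> by auto
    finally show ?thesis .
  qed
qed

lemma G3:
  fixes B :: "bit mat"
  assumes B: "B \<in> carrier_mat m n" and s0: "s0 \<in> carrier_vec m"
  shows "card {s \<in> carrier_vec m. B\<^sup>T *\<^sub>v s = B\<^sup>T *\<^sub>v s0} = card {s \<in> carrier_vec m. B\<^sup>T *\<^sub>v s = 0\<^sub>v n}"
proof -
  have Bt: "B\<^sup>T \<in> carrier_mat n m" using B by simp
  have dist: "B\<^sup>T *\<^sub>v (s + s0) = B\<^sup>T *\<^sub>v s + B\<^sup>T *\<^sub>v s0" if "s \<in> carrier_vec m" for s
    using that s0 Bt by (intro mult_add_distrib_mat_vec) auto
  have inv: "s + s0 + s0 = s" if "s \<in> carrier_vec m" for s
  proof -
    have "s + s0 + s0 = s + (s0 + s0)" using that s0 by (intro assoc_add_vec) auto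
    thus ?thesis using bitvec_add_self[OF s0] that by simp
  qed
  have "bij_betw (\<lambda>s. s + s0) {s \<in> carrier_vec m. B\<^sup>T *\<^sub>v s = 0\<^sub>v n} {s \<in> carrier_vec m. B\<^sup>T *\<^sub>v s = B\<^sup>T *\<^sub>v s0}"
  proof (rule bij_betwI[where g = "\<lambda>s. s + s0"])
    show "(\<lambda>s. s + s0) \<in> {s \<in> carrier_vec m. B\<^sup>T *\<^sub>v s = 0\<^sub>v n} \<rightarrow> {s \<in> carrier_vec m. B\<^sup>T *\<^sub>v s = B\<^sup>T *\<^sub>v s0}"
      using dist s0 Bt by auto
    show "(\<lambda>s. s + s0) \<in> {s \<in> carrier_vec m. B\<^sup>T *\<^sub>v s = B\<^sup>T *\<^sub>v s0} \<rightarrow> {s \<in> carrier_vec m. B\<^sup>T *\<^sub>v s = 0\<^sub>v n}"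
    proof
      fix s assume "s \<in> {s \<in> carrier_vec m. B\<^sup>T *\<^sub>v s = B\<^sup>T *\<^sub>v s0}"
      hence s: "s \<in> carrier_vec m" "B\<^sup>T *\<^sub>v s = B\<^sup>T *\<^sub>v s0" by auto
      have "B\<^sup>T *\<^sub>v (s + s0) = B\<^sup>T *\<^sub>v s0 + B\<^sup>T *\<^sub>v s0" using dist[OF s(1)] s(2) by simp
      also have "\<dots> = 0\<^sub>v n" using bitvec_add_self[of "B\<^sup>T *\<^sub>v s0" n] Bt s0 by simp
      finally show "s + s0 \<in> {s \<in> carrier_vec m. B\<^sup>T *\<^sub>v s = 0\<^sub>v n}" using s s0 by simp
    qed
  qed (auto intro: inv)
  thus ?thesis by (simp add: bij_betw_same_card)
qed

lemma sum_1_Suc: "(\<Sum>j\<in>{1..Suc m}. f j) = f 1 + (\<Sum>q<m. f (q + 2))"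
  by (induction m) (auto simp: atLeastAtMostSuc_conv ac_simps)

lemma prod_1_Suc: "(\<Prod>j\<in>{1..Suc m}. f j) = f 1 * (\<Prod>q<m. f (q + 2))"
  by (induction m) (auto simp: atLeastAtMostSuc_conv ac_simps)

lemma sum_shift1: "(\<Sum>i<n. f (Suc i)) = (\<Sum>i\<in>{1..n}. f i)"
  by (induction n) (auto simp: atLeastAtMostSuc_conv ac_simps)

lemma R1:
  assumes circ: "circuit n (circ_pts l w)" and nm: "n = Suc m"
    and h: "\<forall>i\<in>{1..n}. (\<Sum>q<m. of_int (w i (q+2)) * y q) = (0::real)"
  shows "\<forall>q<m. y q = 0"
proof -
  define z where "z j = (if 2 \<le> j then y (j - 2) else 0)" for j
  obtain c where c: "\<forall>j\<in>{1..n}. z j = (\<Sum>k=0..n+1. c k * of_int (circ_pts l w k j))"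
    using circ unfolding circuit_def by blast
  have T: "(\<Sum>j\<in>{1..n}. of_int (circ_pts l w k j) * z j) = 0" if k: "k \<in> {0..n+1}" for k
  proof -
    consider "k = 0" | "k = 1" | "k \<ge> 2" by linarith
    thus ?thesis
    proof cases
      case 1 thus ?thesis by (simp add: circ_pts_def)
    next
      case 2
      have "(\<Sum>j\<in>{1..n}. of_int (circ_pts l w k j) * z j) = (\<Sum>j\<in>{1..n}. if j = 1 then of_int (int l) * z 1 else 0)"
        using 2 by (intro sum.cong) (auto simp: circ_pts_def)
      also have "\<dots> = 0" by (simp add: z_def)
      finally show ?thesis .
    next
      case 3
      have i: "k - 1 \<in> {1..n}" using 3 k by auto
      have "(\<Sum>j\<in>{1..n}. of_int (circ_pts l w k j) * z j) = (\<Sum>j\<in>{1..n}. of_int (w (k-1) j) * z j)"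
        using 3 by (intro sum.cong) (auto simp: circ_pts_def)
      also have "\<dots> = (\<Sum>q<m. of_int (w (k-1) (q+2)) * y q)"
        unfolding nm sum_1_Suc by (simp add: z_def)
      also have "\<dots> = 0" using h i by blast
      finally show ?thesis .
    qed
  qed
  define K where "K = {0..n+1}"
  have "(\<Sum>j\<in>{1..n}. z j * z j) = (\<Sum>j\<in>{1..n}. z j * (\<Sum>k\<in>K. c k * of_int (circ_pts l w k j)))"
    using c unfolding K_def by (intro sum.cong) auto
  also have "\<dots> = (\<Sum>j\<in>{1..n}. \<Sum>k\<in>K. c k * (of_int (circ_pts l w k j) * z j))"
    by (simp add: sum_distrib_left mult_ac)
  also have "\<dots> = (\<Sum>k\<in>K. \<Sum>j\<in>{1..n}. c k * (of_int (circ_pts l w k j) * z j))"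
    by (rule sum.swap)
  also have "\<dots> = (\<Sum>k\<in>K. c k * (\<Sum>j\<in>{1..n}. of_int (circ_pts l w k j) * z j))"
    by (simp add: sum_distrib_left)
  also have "\<dots> = 0" using T unfolding K_def by simp
  finally have S0: "(\<Sum>j\<in>{1..n}. z j * z j) = 0" .
  have "\<forall>j\<in>{1..n}. z j * z j = 0"
    using S0 sum_nonneg_eq_0_iff[of "{1..n}" "\<lambda>j. z j * z j"] by simp
  show ?thesis
  proof (intro allI impI)
    fix q assume q: "q < m"
    hence "q + 2 \<in> {1..n}" using nm by auto
    hence "z (q+2) * z (q+2) = 0" using \<open>\<forall>j\<in>{1..n}. z j * z j = 0\<close> by blast
    thus "y q = 0" unfolding z_def by simp
  qed
qed

lemma R2:
  assumes circ: "circuit n (circ_pts l w)" and nm: "n = Suc m"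
    and relv: "\<forall>q<m. (\<Sum>i\<in>{1..n}. mu i * w i (q+2)) = 0"
    and munz: "\<exists>k\<in>{1..n}. mu k \<noteq> 0"
    and hb: "(\<Sum>i\<in>{1..n}. of_int (mu i) * \<beta> i) = (0::real)"
  shows "\<exists>y. \<forall>i\<in>{1..n}. (\<Sum>q<m. of_int (w i (q+2)) * y q) = \<beta> i"
proof -
  define N :: "real mat" where "N = mat n n (\<lambda>(i,q). if q < m then of_int (w (i+1) (q+2)) else of_int (mu (i+1)))"
  have N: "N \<in> carrier_mat n n" unfolding N_def by simp
  have Nz: "(N *\<^sub>v z) $ i = (\<Sum>q<m. of_int (w (i+1) (q+2)) * z $ q) + of_int (mu (i+1)) * z $ m"
    if "i < n" "z \<in> carrier_vec n" for i z
  proof -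
    have "(N *\<^sub>v z) $ i = (\<Sum>q<n. N $$ (i, q) * z $ q)"
      using that N by (simp add: mult_mat_vec_def scalar_prod_def atLeast0LessThan)
    also have "\<dots> = (\<Sum>q<m. N $$ (i, q) * z $ q) + N $$ (i, m) * z $ m" unfolding nm by simp
    also have "\<dots> = (\<Sum>q<m. of_int (w (i+1) (q+2)) * z $ q) + of_int (mu (i+1)) * z $ m"
      using that unfolding N_def nm by simp
    finally show ?thesis .
  qed
  have musq: "(\<Sum>i\<in>{1..n}. of_int (mu i) * of_int (mu i)) > (0::real)"
  proof -
    obtain k where k: "k \<in> {1..n}" "mu k \<noteq> 0" using munz by blast
    have "(\<Sum>i\<in>{1..n}. of_int (mu i) * of_int (mu i)) \<ge> (of_int (mu k) * of_int (mu k) :: real)"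
      using k by (intro member_le_sum) auto
    moreover have "(of_int (mu k) * of_int (mu k) :: real) > 0" 
    proof -
      have "(of_int (mu k)::real) \<noteq> 0" using k by simp
      thus ?thesis by (cases "of_int (mu k) > (0::real)") (auto simp: mult_pos_pos mult_neg_neg)
    qed
    ultimately show ?thesis by linarith
  qed
  have swap: "(\<Sum>i\<in>{1..n}. of_int (mu i) * (\<Sum>q<m. of_int (w i (q+2)) * y q)) = (0::real)" for y
  proof -
    have "(\<Sum>i\<in>{1..n}. of_int (mu i) * (\<Sum>q<m. of_int (w i (q+2)) * y q))
        = (\<Sum>q<m. y q * of_int (\<Sum>i\<in>{1..n}. mu i * w i (q+2)))"
      by (simp add: sum_distrib_left sum_distrib_right mult_ac, rule sum.swap)
    also have "\<dots> = 0" using relv by simp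
    finally show ?thesis .
  qed
  have "det N \<noteq> 0"
  proof
    assume "det N = 0"
    then obtain z where z: "z \<in> carrier_vec n" "z \<noteq> 0\<^sub>v n" "N *\<^sub>v z = 0\<^sub>v n"
      using det_0_iff_vec_prod_zero_field[OF N] by blast
    define y where "y q = z $ q" for q
    have eq0: "(\<Sum>q<m. of_int (w i (q+2)) * y q) + of_int (mu i) * z $ m = 0" if "i \<in> {1..n}" for i
    proof -
      have "i - 1 < n" using that by auto
      from Nz[OF this z(1)] z(3) this that show ?thesis by (simp add: y_def)
    qed
    have "(\<Sum>i\<in>{1..n}. of_int (mu i) * ((\<Sum>q<m. of_int (w i (q+2)) * y q) + of_int (mu i) * z $ m)) = 0"
      using eq0 by simp
    hence "(\<Sum>i\<in>{1..n}. of_int (mu i) * (\<Sum>q<m. of_int (w i (q+2)) * y q))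
           + z $ m * (\<Sum>i\<in>{1..n}. of_int (mu i) * of_int (mu i)) = 0"
      by (simp add: distrib_left sum.distrib sum_distrib_left mult_ac)
    hence "z $ m * (\<Sum>i\<in>{1..n}. of_int (mu i) * of_int (mu i)) = 0" using swap by simp
    hence zm: "z $ m = 0" using musq by simp
    have "\<forall>i\<in>{1..n}. (\<Sum>q<m. of_int (w i (q+2)) * y q) = 0" using eq0 zm by simp
    hence "\<forall>q<m. y q = 0" using R1[OF circ nm] by blast
    hence "z = 0\<^sub>v n"
      using zm z(1) unfolding y_def nm by (intro eq_vecI) (auto simp: less_Suc_eq)
    thus False using z(2) by simp
  qed
  from det_non_zero_imp_unit[OF N this, of undefined]
  obtain N' where N': "N' \<in> carrier_mat n n" "N * N' = 1\<^sub>m n"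
    unfolding Units_def ring_mat_def by auto
  define bv where "bv = vec n (\<lambda>i. \<beta> (i+1))"
  define z where "z = N' *\<^sub>v bv"
  have zc: "z \<in> carrier_vec n" using N' unfolding z_def bv_def by simp
  have "N *\<^sub>v z = bv"
  proof -
    have bvc: "bv \<in> carrier_vec n" unfolding bv_def by simp
    have "N *\<^sub>v z = (N * N') *\<^sub>v bv" unfolding z_def
      using assoc_mult_mat_vec[OF N N'(1) bvc] by simp
    thus ?thesis using N' bv_def by simp
  qed
  define y where "y q = z $ q" for q
  have eqb: "(\<Sum>q<m. of_int (w i (q+2)) * y q) + of_int (mu i) * z $ m = \<beta> i" if "i \<in> {1..n}" for i
  proof -
    have "i - 1 < n" using that by auto
    from Nz[OF this zc] \<open>N *\<^sub>v z = bv\<close> this that show ?thesis by (simp add: y_def bv_def)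
  qed
  have "(\<Sum>i\<in>{1..n}. of_int (mu i) * ((\<Sum>q<m. of_int (w i (q+2)) * y q) + of_int (mu i) * z $ m)) = 0"
    using eqb hb by simp
  hence "(\<Sum>i\<in>{1..n}. of_int (mu i) * (\<Sum>q<m. of_int (w i (q+2)) * y q))
           + z $ m * (\<Sum>i\<in>{1..n}. of_int (mu i) * of_int (mu i)) = 0"
    by (simp add: distrib_left sum.distrib sum_distrib_left mult_ac)
  hence "z $ m * (\<Sum>i\<in>{1..n}. of_int (mu i) * of_int (mu i)) = 0" using swap by simp
  hence zm: "z $ m = 0" using musq by simp
  thus ?thesis using eqb by (intro exI[of _ y]) simp
qed

definition rs :: "bit \<Rightarrow> real" where "rs b = (if b = 0 then 1 else -1)"
definition ng :: "real \<Rightarrow> bit" where "ng x = (if x < 0 then 1 else 0)"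

lemma rs_add: "rs (a + b) = rs a * rs b"
  by (cases a; cases b) (auto simp: rs_def)

lemma rs_sum: "finite I \<Longrightarrow> rs (\<Sum>i\<in>I. f i) = (\<Prod>i\<in>I. rs (f i))"
proof (induction I rule: finite_induct)
  case empty show ?case by (simp add: rs_def)
next
  case (insert x F) thus ?case by (simp only: sum.insert[OF insert(1,2)] prod.insert[OF insert(1,2)] rs_add insert(3))
qed

lemma rs_1_iff: "rs b = 1 \<longleftrightarrow> b = 0" by (cases b) (auto simp: rs_def)

lemma rs_ng: "rs (ng x) * \<bar>x\<bar> = x" by (auto simp: rs_def ng_def)

lemma of_int_bit: "(of_int k :: bit) = (if even k then 0 else 1)"
proof -
  have "(of_int k :: bit) = of_int (k mod 2 + 2 * (k div 2))" by simp
  also have "\<dots> = of_int (k mod 2) + 2 * of_int (k div 2)" by (simp only: of_int_add of_int_mult of_int_numeral)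
  also have "\<dots> = of_int (k mod 2)" by simp
  also have "\<dots> = (if even k then 0 else 1)"
    by (cases "even k") (auto simp: odd_iff_mod_2_eq_one even_iff_mod_2_eq_zero)
  finally show ?thesis .
qed

lemma powi_sign: "(x::real) \<noteq> 0 \<Longrightarrow> x powi k = rs (of_int k * ng x) * \<bar>x\<bar> powi k"
proof (cases "x < 0")
  case True
  hence "x = - \<bar>x\<bar>" by simp
  hence "x powi k = (- \<bar>x\<bar>) powi k" by simp
  also have "\<dots> = (if even k then \<bar>x\<bar> powi k else - (\<bar>x\<bar> powi k))" by (rule power_int_minus_left)
  finally have e: "x powi k = (if even k then \<bar>x\<bar> powi k else - (\<bar>x\<bar> powi k))" .
  have ngx: "ng x = 1" using True by (simp add: ng_def)
  show ?thesis
  proof (cases "even k")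
    case True
    hence "(of_int k :: bit) = 0" by (simp only: of_int_bit if_True)
    hence "rs (of_int k * ng x) = 1" by (simp add: rs_def)
    thus ?thesis using e True by simp
  next
    case False
    hence "(of_int k :: bit) = 1" by (simp only: of_int_bit if_False)
    hence "rs (of_int k * ng x) = -1" using ngx by (simp add: rs_def)
    thus ?thesis using e False by simp
  qed
next
  case False
  moreover assume "x \<noteq> 0"
  ultimately show ?thesis by (simp add: ng_def rs_def)
qed

lemma prod_powi_sign:
  assumes "finite I" "\<forall>i\<in>I. z i \<noteq> (0::real)"
  shows "(\<Prod>i\<in>I. z i powi k i) = rs (\<Sum>i\<in>I. of_int (k i) * ng (z i)) * (\<Prod>i\<in>I. \<bar>z i\<bar> powi k i)"
proof -
  have "(\<Prod>i\<in>I. z i powi k i) = (\<Prod>i\<in>I. rs (of_int (k i) * ng (z i)) * \<bar>z i\<bar> powi k i)"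
  proof (rule prod.cong[OF refl])
    fix i assume "i \<in> I"
    thus "z i powi k i = rs (of_int (k i) * ng (z i)) * \<bar>z i\<bar> powi k i" using assms(2) by (intro powi_sign) auto
  qed
  also have "\<dots> = (\<Prod>i\<in>I. rs (of_int (k i) * ng (z i))) * (\<Prod>i\<in>I. \<bar>z i\<bar> powi k i)"
    by (rule prod.distrib)
  finally show ?thesis unfolding rs_sum[OF assms(1)] .
qed

lemma prod_abs_pos:
  assumes "\<forall>i\<in>I. z i \<noteq> (0::real)"
  shows "(\<Prod>i\<in>I. \<bar>z i\<bar> powi k i) > 0"
  using assms by (intro prod_pos) (auto intro: zero_less_power_int)

lemma ln_powi: "(x::real) > 0 \<Longrightarrow> ln (x powi k) = of_int k * ln x"
proof (cases "k \<ge> 0")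
  case True
  assume x: "x > 0"
  have "x powi k = x ^ nat k" using True by (simp add: power_int_def)
  thus ?thesis using True x by (simp add: ln_realpow)
next
  case False
  assume x: "x > 0"
  have "x powi k = inverse (x ^ nat (- k))" using False by (simp add: power_int_def power_inverse)
  thus ?thesis using False x by (simp add: ln_inverse ln_realpow)
qed

lemma ln_prod_powi:
  assumes "finite I" "\<forall>i\<in>I. z i > (0::real)"
  shows "ln (\<Prod>i\<in>I. z i powi k i) = (\<Sum>i\<in>I. of_int (k i) * ln (z i))"
proof -
  have "ln (\<Prod>i\<in>I. z i powi k i) = (\<Sum>i\<in>I. ln (z i powi k i))"
    using assms by (intro ln_prod) (auto intro: zero_less_power_int dest: less_imp_neq[symmetric])
  also have "\<dots> = (\<Sum>i\<in>I. of_int (k i) * ln (z i))" using assms ln_powi by (intro sum.cong) auto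
  finally show ?thesis .
qed

lemma powi_sum:
  assumes "finite I" "(x::real) \<noteq> 0"
  shows "x powi (\<Sum>i\<in>I. f i) = (\<Prod>i\<in>I. x powi f i)"
  using assms by (induction I rule: finite_induct) (auto simp: power_int_add)

lemma sign_abs_eq:
  fixes S :: bit and A D :: real
  assumes A: "A > 0"
  shows "rs S * A = D \<longleftrightarrow> (D \<noteq> 0 \<and> S = ng D \<and> ln A = ln \<bar>D\<bar>)"
proof (cases "S = 0")
  case True
  thus ?thesis using A by (auto simp: rs_def ng_def)
next
  case False
  hence S1: "S = 1" by (cases S) auto
  show ?thesis
  proof
    assume "rs S * A = D" thus "D \<noteq> 0 \<and> S = ng D \<and> ln A = ln \<bar>D\<bar>" using A S1 by (auto simp: rs_def ng_def)
  next
    assume h: "D \<noteq> 0 \<and> S = ng D \<and> ln A = ln \<bar>D\<bar>"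
    hence "A = \<bar>D\<bar>" using A by (metis ln_inj_iff zero_less_abs_iff)
    moreover have "D < 0" using h S1 by (auto simp: ng_def split: if_splits)
    ultimately show "rs S * A = D" using S1 by (simp add: rs_def)
  qed
qed

lemma mult_eq_div_iff: "(c::real) \<noteq> 0 \<Longrightarrow> c * p = G \<longleftrightarrow> p = G / c"
  by (auto simp: field_simps)

lemma eq_char:
  fixes x :: "nat \<Rightarrow> real" and r G :: real and k :: "nat \<Rightarrow> int"
  assumes r: "r \<noteq> 0" and x: "\<forall>q<m. x (q+2) \<noteq> 0"
  shows "r powi k 1 * (\<Prod>q<m. x (q+2) powi k (q+2)) = G \<longleftrightarrow>
     (G / r powi k 1 \<noteq> 0 \<and> (\<Sum>q<m. of_int (k (q+2)) * ng (x (q+2))) = ng (G / r powi k 1) \<and>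
      (\<Sum>q<m. of_int (k (q+2)) * ln \<bar>x (q+2)\<bar>) = ln \<bar>G / r powi k 1\<bar>)"
proof -
  let ?D = "G / r powi k 1"
  let ?S = "\<Sum>q<m. of_int (k (q+2)) * ng (x (q+2))"
  let ?A = "\<Prod>q<m. \<bar>x (q+2)\<bar> powi k (q+2)"
  have rp: "r powi k 1 \<noteq> 0" using r by simp
  have P: "(\<Prod>q<m. x (q+2) powi k (q+2)) = rs ?S * ?A"
    using prod_powi_sign[of "{..<m}" "\<lambda>q. x (q+2)" "\<lambda>q. k (q+2)"] x by simp
  have Apos: "?A > 0" using prod_abs_pos[of "{..<m}" "\<lambda>q. x (q+2)" "\<lambda>q. k (q+2)"] x by simp
  have lnA: "ln ?A = (\<Sum>q<m. of_int (k (q+2)) * ln \<bar>x (q+2)\<bar>)"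
    using ln_prod_powi[of "{..<m}" "\<lambda>q. \<bar>x (q+2)\<bar>" "\<lambda>q. k (q+2)"] x by simp
  have "r powi k 1 * (\<Prod>q<m. x (q+2) powi k (q+2)) = G \<longleftrightarrow> (\<Prod>q<m. x (q+2) powi k (q+2)) = ?D"
    using mult_eq_div_iff[OF rp] .
  also have "\<dots> \<longleftrightarrow> rs ?S * ?A = ?D" unfolding P ..
  also have "\<dots> \<longleftrightarrow> (?D \<noteq> 0 \<and> ?S = ng ?D \<and> ln ?A = ln \<bar>?D\<bar>)" by (rule sign_abs_eq[OF Apos])
  finally show ?thesis unfolding lnA .
qed

lemma card_fibers:
  assumes img: "\<forall>x\<in>X. \<pi> x \<in> R" and fib: "\<forall>r\<in>R. card {x\<in>X. \<pi> x = r} = k" and k: "k > 0"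
  shows "card X = k * card R"
proof (cases "finite R")
  case True
  have fin: "\<forall>r\<in>R. finite {x\<in>X. \<pi> x = r}" using fib k by (metis card.infinite less_irrefl)
  have X: "X = (\<Union>r\<in>R. {x\<in>X. \<pi> x = r})" using img by auto
  have "card X = (\<Sum>r\<in>R. card {x\<in>X. \<pi> x = r})"
    by (subst X, rule card_UN_disjoint) (use True fin in auto)
  also have "\<dots> = (\<Sum>r\<in>R. k)" using fib by simp
  finally show ?thesis by simp
next
  case False
  have "R \<subseteq> \<pi> ` X"
  proof
    fix r assume r: "r \<in> R"
    hence "{x\<in>X. \<pi> x = r} \<noteq> {}" using fib k by (metis card.empty less_irrefl)
    thus "r \<in> \<pi> ` X" by auto
  qed
  hence "infinite X" using False finite_surj by blast
  thus ?thesis using False by simp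
qed

lemma circuit_n_pos: assumes circ: "circuit n (circ_pts l w)" shows "n \<ge> 1"
proof (rule ccontr)
  assume "\<not> n \<ge> 1"
  hence n0: "n = 0" by simp
  have "inj_on (\<lambda>k. restrict (circ_pts l w k) {1..n}) {0..n+1}" using circ unfolding circuit_def by blast
  moreover have "restrict (circ_pts l w 0) {1..n} = restrict (circ_pts l w 1) {1..n}" using n0 by auto
  ultimately have "(0::nat) = 1" by (rule inj_onD) (use n0 in auto)
  thus False by simp
qed

locale sys =
  fixes n m l :: nat and w :: "nat \<Rightarrow> nat \<Rightarrow> int" and a b :: "nat \<Rightarrow> real" and mu :: "nat \<Rightarrow> int"
  assumes circ: "circuit n (circ_pts l w)"
    and rel: "\<forall>j\<in>{1..n}. mu 0 * (if j = 1 then 1 else 0) + (\<Sum>i\<in>{1..n}. mu i * w i j) = 0"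
    and prim: "Gcd (mu ` {0..n}) = 1"
    and mu0: "mu 0 \<ge> 0"
    and nm: "n = Suc m"
begin

lemma n1: "n - 1 = m" using nm by simp
lemma n_pos: "n \<ge> 1" using nm by simp
lemma n1': "n - Suc 0 = m" using nm by simp

lemma Bc: "Bbar n w \<in> carrier_mat m n" unfolding Bbar_def n1 by simp

lemma BT_entry:
  assumes s: "s \<in> carrier_vec m" and i: "i < n"
  shows "((Bbar n w)\<^sup>T *\<^sub>v s) $ i = (\<Sum>q<m. of_int (w (i+1) (q+2)) * s $ q)"
proof -
  have "((Bbar n w)\<^sup>T *\<^sub>v s) $ i = row ((Bbar n w)\<^sup>T) i \<bullet> s" using i Bc by simp
  also have "\<dots> = (\<Sum>q<m. row ((Bbar n w)\<^sup>T) i $ q * s $ q)"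
    using s by (simp add: scalar_prod_def atLeast0LessThan)
  also have "\<dots> = (\<Sum>q<m. of_int (w (i+1) (q+2)) * s $ q)"
  proof (rule sum.cong[OF refl])
    fix q assume "q \<in> {..<m}"
    hence q: "q < m" by simp
    have e: "row ((Bbar n w)\<^sup>T) i $ q = of_int (w (i+1) (q+2))" using i q by (simp add: Bbar_def n1 n1')
    show "row ((Bbar n w)\<^sup>T) i $ q * s $ q = of_int (w (i+1) (q+2)) * s $ q" by (simp only: e)
  qed
  finally show ?thesis .
qed

lemma B_entry:
  assumes e: "e \<in> carrier_vec n" and q: "q < m"
  shows "(Bbar n w *\<^sub>v e) $ q = (\<Sum>i<n. of_int (w (i+1) (q+2)) * e $ i)"
proof -
  have "(Bbar n w *\<^sub>v e) $ q = row (Bbar n w) q \<bullet> e" using q Bc by simp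
  also have "\<dots> = (\<Sum>i<n. row (Bbar n w) q $ i * e $ i)"
    using e by (simp add: scalar_prod_def atLeast0LessThan)
  also have "\<dots> = (\<Sum>i<n. of_int (w (i+1) (q+2)) * e $ i)"
  proof (rule sum.cong[OF refl])
    fix i assume "i \<in> {..<n}"
    hence i: "i < n" by simp
    have ee: "row (Bbar n w) q $ i = of_int (w (i+1) (q+2))" using i q by (simp add: Bbar_def n1 n1')
    show "row (Bbar n w) q $ i * e $ i = of_int (w (i+1) (q+2)) * e $ i" by (simp only: ee)
  qed
  finally show ?thesis .
qed

lemma relv: "\<forall>q<m. (\<Sum>i\<in>{1..n}. mu i * w i (q+2)) = 0"
proof (intro allI impI)
  fix q assume "q < m"
  hence "q + 2 \<in> {1..n}" using nm by auto
  thus "(\<Sum>i\<in>{1..n}. mu i * w i (q+2)) = 0" using rel by fastforce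
qed

lemma rel1: "(\<Sum>i\<in>{1..n}. mu i * w i 1) = - mu 0"
proof -
  have "1 \<in> {1..n}" using n_pos by auto
  thus ?thesis using rel by fastforce
qed

lemma mu_ker: "Bbar n w *\<^sub>v vec n (\<lambda>i. of_int (mu (i+1))) = 0\<^sub>v m"
proof (rule eq_vecI)
  fix q assume "q < dim_vec (0\<^sub>v m :: bit vec)"
  hence q: "q < m" by simp
  have "(Bbar n w *\<^sub>v vec n (\<lambda>i. of_int (mu (i+1)))) $ q = (\<Sum>i<n. of_int (w (i+1) (q+2)) * vec n (\<lambda>i. of_int (mu (i+1))) $ i)"
    by (rule B_entry[OF _ q]) simp
  also have "\<dots> = (\<Sum>i<n. of_int (w (i+1) (q+2)) * (of_int (mu (i+1)) :: bit))"
    by (intro sum.cong refl) simp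
  also have "\<dots> = of_int (\<Sum>i<n. w (i+1) (q+2) * mu (i+1))" by (simp only: of_int_sum of_int_mult)
  also have "(\<Sum>i<n. w (i+1) (q+2) * mu (i+1)) = (\<Sum>i\<in>{1..n}. mu i * w i (q+2))"
    using sum_shift1[of "\<lambda>i. mu i * w i (q+2)" n] by (simp add: mult.commute)
  also have "(\<Sum>i\<in>{1..n}. mu i * w i (q+2)) = 0" using relv q by simp
  finally show "(Bbar n w *\<^sub>v vec n (\<lambda>i. of_int (mu (i+1)))) $ q = 0\<^sub>v m $ q" using q by simp
qed (use Bc in simp)

lemma munz: "\<exists>k\<in>{1..n}. mu k \<noteq> 0"
proof (rule ccontr)
  assume "\<not> ?thesis"
  hence z: "\<forall>k\<in>{1..n}. mu k = 0" by blast
  hence "mu 0 = 0" using rel1 by simp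
  hence all: "\<forall>k\<in>{0..n}. mu k = 0"
  proof (intro ballI)
    fix k assume k: "k \<in> {0..n}" and m0: "mu 0 = 0"
    show "mu k = 0"
    proof (cases "k = 0")
      case True thus ?thesis using m0 by simp
    next
      case False hence "k \<in> {1..n}" using k by auto
      thus ?thesis using z by blast
    qed
  qed
  have "mu ` {0..n} = {0}"
  proof
    show "mu ` {0..n} \<subseteq> {0}" using all by blast
    show "{0} \<subseteq> mu ` {0..n}" using all by (metis atLeastAtMost_iff empty_subsetI image_eqI insert_subset le0 order_refl)
  qed
  thus False using prim by simp
qed

lemma monom_split: "monom_int n (w i) x = x 1 powi w i 1 * (\<Prod>q<m. x (q+2) powi w i (q+2))"
  unfolding monom_int_def using prod_1_Suc[of "\<lambda>j. x j powi w i j" m] nm by simp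

end

lemma all_shift: "(\<forall>i<n. P (Suc i)) \<longleftrightarrow> (\<forall>i\<in>{1..n}. P i)"
proof
  assume h: "\<forall>i<n. P (Suc i)"
  show "\<forall>i\<in>{1..n}. P i"
  proof
    fix i assume i: "i \<in> {1..n}"
    hence "i - 1 < n" "Suc (i - 1) = i" by auto
    thus "P i" using h by metis
  qed
qed auto

lemma ng_rs: "c > 0 \<Longrightarrow> ng (rs s * c) = s"
  by (cases s) (auto simp: rs_def ng_def)

lemma vec_eq_iff_idx:
  assumes "u \<in> carrier_vec n" "v \<in> carrier_vec n"
  shows "u = v \<longleftrightarrow> (\<forall>i<n. u $ i = v $ i)"
  using assms by (metis carrier_vecD eq_vecI)

lemma rs_pm: "rs s = 1 \<or> rs s = -1" by (auto simp: rs_def)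

context sys begin

definition dd :: "nat \<Rightarrow> real \<Rightarrow> real" where "dd i r = gpol l (a i) (b i) r / r powi (w i 1)"
definition sig :: "real \<Rightarrow> bit vec" where "sig r = vec n (\<lambda>i. ng (dd (i+1) r))"
definition sv :: "(nat \<Rightarrow> real) \<Rightarrow> bit vec" where "sv x = vec m (\<lambda>q. ng (x (q+2)))"

lemma sv_carrier: "sv x \<in> carrier_vec m" unfolding sv_def by simp
lemma sig_carrier: "sig r \<in> carrier_vec n" unfolding sig_def by simp

lemma BT_sv: "((Bbar n w)\<^sup>T *\<^sub>v sv x = sig r) \<longleftrightarrow>
   (\<forall>i\<in>{1..n}. (\<Sum>q<m. of_int (w i (q+2)) * ng (x (q+2))) = ng (dd i r))"
proof -
  have c1: "(Bbar n w)\<^sup>T *\<^sub>v sv x \<in> carrier_vec n" using Bc sv_carrier by simp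
  have "((Bbar n w)\<^sup>T *\<^sub>v sv x = sig r) \<longleftrightarrow> (\<forall>i<n. ((Bbar n w)\<^sup>T *\<^sub>v sv x) $ i = sig r $ i)"
    by (rule vec_eq_iff_idx[OF c1 sig_carrier])
  also have "\<dots> \<longleftrightarrow> (\<forall>i<n. (\<Sum>q<m. of_int (w (Suc i) (q+2)) * ng (x (q+2))) = ng (dd (Suc i) r))"
  proof -
    have "((Bbar n w)\<^sup>T *\<^sub>v sv x) $ i = (\<Sum>q<m. of_int (w (Suc i) (q+2)) * ng (x (q+2)))" if i: "i < n" for i
    proof -
      have "((Bbar n w)\<^sup>T *\<^sub>v sv x) $ i = (\<Sum>q<m. of_int (w (i+1) (q+2)) * sv x $ q)"
        by (rule BT_entry[OF sv_carrier i])
      also have "\<dots> = (\<Sum>q<m. of_int (w (Suc i) (q+2)) * ng (x (q+2)))"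
      proof (rule sum.cong[OF refl])
        fix q assume "q \<in> {..<m}"
        hence "sv x $ q = ng (x (q+2))" unfolding sv_def by simp
        thus "of_int (w (i+1) (q+2)) * sv x $ q = of_int (w (Suc i) (q+2)) * ng (x (q+2))" by (simp only: Suc_eq_plus1)
      qed
      finally show ?thesis .
    qed
    moreover have "sig r $ i = ng (dd (Suc i) r)" if "i < n" for i using that unfolding sig_def by simp
    ultimately show ?thesis by (metis (no_types, lifting))
  qed
  also have "\<dots> \<longleftrightarrow> (\<forall>i\<in>{1..n}. (\<Sum>q<m. of_int (w i (q+2)) * ng (x (q+2))) = ng (dd i r))"
    by (rule all_shift)
  finally show ?thesis .
qed

lemma sys_char:
  assumes r: "r \<noteq> 0" and x1: "x 1 = r" and x: "\<forall>q<m. x (q+2) \<noteq> 0"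
  shows "(\<forall>i\<in>{1..n}. monom_int n (w i) x = gpol l (a i) (b i) r) \<longleftrightarrow>
   ((\<forall>i\<in>{1..n}. dd i r \<noteq> 0) \<and> (Bbar n w)\<^sup>T *\<^sub>v sv x = sig r \<and>
    (\<forall>i\<in>{1..n}. (\<Sum>q<m. of_int (w i (q+2)) * ln \<bar>x (q+2)\<bar>) = ln \<bar>dd i r\<bar>))"
proof -
  have each: "monom_int n (w i) x = gpol l (a i) (b i) r \<longleftrightarrow>
     (dd i r \<noteq> 0 \<and> (\<Sum>q<m. of_int (w i (q+2)) * ng (x (q+2))) = ng (dd i r) \<and>
      (\<Sum>q<m. of_int (w i (q+2)) * ln \<bar>x (q+2)\<bar>) = ln \<bar>dd i r\<bar>)" for i
    unfolding monom_split x1 dd_def by (rule eq_char[OF r x])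
  show ?thesis unfolding each BT_sv by blast
qed

lemma prodsign:
  assumes nz: "\<forall>i\<in>{1..n}. dd i r \<noteq> 0"
  shows "(\<Prod>i\<in>{1..n}. dd i r powi eps i) > 0 \<longleftrightarrow> sig r \<bullet> vec n (\<lambda>i. of_int (eps (i+1))) = 0"
proof -
  let ?S = "\<Sum>i\<in>{1..n}. of_int (eps i) * ng (dd i r)"
  let ?A = "\<Prod>i\<in>{1..n}. \<bar>dd i r\<bar> powi eps i"
  have P: "(\<Prod>i\<in>{1..n}. dd i r powi eps i) = rs ?S * ?A"
    using prod_powi_sign[of "{1..n}" "\<lambda>i. dd i r" eps] nz by simp
  have A: "?A > 0" using prod_abs_pos[of "{1..n}" "\<lambda>i. dd i r" eps] nz by simp
  have "(\<Prod>i\<in>{1..n}. dd i r powi eps i) > 0 \<longleftrightarrow> rs ?S = 1"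
    unfolding P using rs_pm[of ?S] A by (auto simp: zero_less_mult_iff)
  also have "\<dots> \<longleftrightarrow> ?S = 0" by (rule rs_1_iff)
  also have "?S = sig r \<bullet> vec n (\<lambda>i. of_int (eps (i+1)))"
  proof -
    have "sig r \<bullet> vec n (\<lambda>i. of_int (eps (i+1))) = (\<Sum>i<n. sig r $ i * vec n (\<lambda>i. of_int (eps (i+1))) $ i)"
      by (simp add: scalar_prod_def atLeast0LessThan)
    also have "\<dots> = (\<Sum>i<n. of_int (eps (Suc i)) * ng (dd (Suc i) r))"
    proof (rule sum.cong[OF refl])
      fix i assume "i \<in> {..<n}"
      hence e1: "sig r $ i = ng (dd (Suc i) r)" and e2: "vec n (\<lambda>i. of_int (eps (i+1))) $ i = (of_int (eps (Suc i)) :: bit)"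
        unfolding sig_def by simp_all
      show "sig r $ i * vec n (\<lambda>i. of_int (eps (i+1))) $ i = of_int (eps (Suc i)) * ng (dd (Suc i) r)"
        by (simp only: e1 e2 mult.commute)
    qed
    also have "\<dots> = ?S" by (rule sum_shift1)
    finally show ?thesis by simp
  qed
  finally show ?thesis .
qed

lemma vec_of_bits:
  assumes e: "(e :: bit vec) \<in> carrier_vec n"
  shows "vec n (\<lambda>i. of_int ((\<lambda>j. if e $ (j - 1) = 1 then 1 else 0) (i+1))) = e"
proof (rule eq_vecI)
  fix i assume "i < dim_vec e"
  hence i: "i < n" using e by simp
  show "vec n (\<lambda>i. of_int ((\<lambda>j. if e $ (j - 1) = 1 then 1 else 0) (i+1))) $ i = e $ i"
    using i by (cases "e $ i") auto
qed (use e in simp)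

lemma eps_char:
  assumes r: "r \<noteq> 0"
  shows "(\<forall>eps. Bbar n w *\<^sub>v vec n (\<lambda>i. of_int (eps (i + 1))) = 0\<^sub>v (n - 1) \<longrightarrow>
            (\<Prod>i\<in>{1..n}. (gpol l (a i) (b i) r / r powi (w i 1)) powi (eps i)) > 0) \<longleftrightarrow>
         ((\<forall>i\<in>{1..n}. dd i r \<noteq> 0) \<and> (\<forall>e\<in>carrier_vec n. Bbar n w *\<^sub>v e = 0\<^sub>v m \<longrightarrow> sig r \<bullet> e = 0))"
  (is "?L \<longleftrightarrow> ?R")
proof
  assume L: ?L
  have L': "\<And>eps. Bbar n w *\<^sub>v vec n (\<lambda>i. of_int (eps (i + 1))) = 0\<^sub>v m \<Longrightarrow> (\<Prod>i\<in>{1..n}. dd i r powi eps i) > 0"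
    using L unfolding dd_def n1 by blast
  have nz: "\<forall>i\<in>{1..n}. dd i r \<noteq> 0"
  proof
    fix i assume i: "i \<in> {1..n}"
    define eps where "eps j = (if j = i then (2::int) else 0)" for j
    have "vec n (\<lambda>j. of_int (eps (j + 1))) = (0\<^sub>v n :: bit vec)"
      by (rule eq_vecI) (auto simp: eps_def)
    moreover have "Bbar n w *\<^sub>v (0\<^sub>v n :: bit vec) = 0\<^sub>v m" using Bc by (intro eq_vecI) auto
    ultimately have "Bbar n w *\<^sub>v vec n (\<lambda>j. of_int (eps (j + 1))) = 0\<^sub>v m" by simp
    hence pos: "(\<Prod>j\<in>{1..n}. dd j r powi eps j) > 0" by (rule L')
    have "(\<Prod>j\<in>{1..n}. dd j r powi eps j) = (\<Prod>j\<in>{1..n}. if j = i then dd i r powi 2 else 1)"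
      by (intro prod.cong refl) (simp add: eps_def)
    also have "\<dots> = dd i r powi 2" using i by simp
    finally have "dd i r powi 2 > 0" using pos by simp
    thus "dd i r \<noteq> 0" by auto
  qed
  moreover have "\<forall>e\<in>carrier_vec n. Bbar n w *\<^sub>v e = 0\<^sub>v m \<longrightarrow> sig r \<bullet> e = 0"
  proof (intro ballI impI)
    fix e :: "bit vec" assume e: "e \<in> carrier_vec n" and Be: "Bbar n w *\<^sub>v e = 0\<^sub>v m"
    define eps where "eps = (\<lambda>j. if e $ (j - 1) = 1 then (1::int) else 0)"
    have ve: "vec n (\<lambda>i. of_int (eps (i+1))) = e" unfolding eps_def by (rule vec_of_bits[OF e])
    have "(\<Prod>i\<in>{1..n}. dd i r powi eps i) > 0" using L' Be ve by simp
    hence "sig r \<bullet> vec n (\<lambda>i. of_int (eps (i+1))) = 0" using prodsign[OF nz] by blast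
    thus "sig r \<bullet> e = 0" using ve by simp
  qed
  ultimately show ?R by blast
next
  assume R: ?R
  hence nz: "\<forall>i\<in>{1..n}. dd i r \<noteq> 0" by blast
  show ?L
  proof (intro allI impI)
    fix eps :: "nat \<Rightarrow> int"
    assume "Bbar n w *\<^sub>v vec n (\<lambda>i. of_int (eps (i + 1))) = 0\<^sub>v (n - 1)"
    hence "Bbar n w *\<^sub>v vec n (\<lambda>i. of_int (eps (i + 1))) = 0\<^sub>v m" unfolding n1 .
    hence "sig r \<bullet> vec n (\<lambda>i. of_int (eps (i+1))) = 0" using R by simp
    hence "(\<Prod>i\<in>{1..n}. dd i r powi eps i) > 0" using prodsign[OF nz] by blast
    thus "(\<Prod>i\<in>{1..n}. (gpol l (a i) (b i) r / r powi (w i 1)) powi (eps i)) > 0" unfolding dd_def .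
  qed
qed

end

context sys begin

lemma elim_char:
  assumes r: "r \<noteq> 0" and nz: "\<forall>i\<in>{1..n}. dd i r \<noteq> 0"
  shows "eliminant n l a b mu r = 0 \<longleftrightarrow> (\<Prod>i\<in>{1..n}. dd i r powi mu i) = 1"
proof -
  define g where "g i = gpol l (a i) (b i) r" for i
  have gnz: "\<forall>i\<in>{1..n}. g i \<noteq> 0" using nz unfolding dd_def g_def by auto
  define Pp where "Pp = (\<Prod>i\<in>{i\<in>{1..n}. 0 < mu i}. g i ^ nat (mu i))"
  define Pn where "Pn = (\<Prod>i\<in>{i\<in>{1..n}. mu i < 0}. g i ^ nat (- mu i))"
  have Pn0: "Pn \<noteq> 0" unfolding Pn_def using gnz by (subst prod_zero_iff) auto
  have gmu: "g i powi mu i = (if 0 < mu i then g i ^ nat (mu i) else 1) / (if mu i < 0 then g i ^ nat (- mu i) else 1)" for i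
  proof (cases "mu i < 0")
    case True
    hence "g i powi mu i = inverse (g i powi (- mu i))" by (simp add: power_int_minus)
    also have "g i powi (- mu i) = g i ^ nat (- mu i)" using True by (simp add: power_int_def)
    finally show ?thesis using True by (simp add: divide_inverse)
  next
    case False
    thus ?thesis by (simp add: power_int_def)
  qed
  have G: "(\<Prod>i\<in>{1..n}. g i powi mu i) = Pp / Pn"
  proof -
    have "(\<Prod>i\<in>{1..n}. g i powi mu i) = (\<Prod>i\<in>{1..n}. if 0 < mu i then g i ^ nat (mu i) else 1) /
            (\<Prod>i\<in>{1..n}. if mu i < 0 then g i ^ nat (- mu i) else 1)"
      unfolding gmu by (rule prod_dividef)
    also have "\<dots> = Pp / Pn" unfolding Pp_def Pn_def prod.inter_filter[OF finite_atLeastAtMost] ..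
    finally show ?thesis .
  qed
  have Rw: "(\<Prod>i\<in>{1..n}. (r powi w i 1) powi mu i) = 1 / r ^ nat (mu 0)"
  proof -
    have "(\<Prod>i\<in>{1..n}. (r powi w i 1) powi mu i) = (\<Prod>i\<in>{1..n}. r powi (mu i * w i 1))"
      by (intro prod.cong refl) (metis power_int_mult mult.commute)
    also have "\<dots> = r powi (\<Sum>i\<in>{1..n}. mu i * w i 1)" using powi_sum[of "{1..n}" r] r by simp
    also have "\<dots> = r powi (- mu 0)" using rel1 by simp
    also have "\<dots> = 1 / r ^ nat (mu 0)" using mu0 by (simp add: power_int_minus power_int_def divide_inverse power_inverse)
    finally show ?thesis .
  qed
  have "(\<Prod>i\<in>{1..n}. dd i r powi mu i) = (\<Prod>i\<in>{1..n}. g i powi mu i / (r powi w i 1) powi mu i)"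
    unfolding dd_def g_def by (simp add: power_int_divide_distrib)
  also have "\<dots> = (\<Prod>i\<in>{1..n}. g i powi mu i) / (\<Prod>i\<in>{1..n}. (r powi w i 1) powi mu i)"
    by (rule prod_dividef)
  also have "\<dots> = r ^ nat (mu 0) * Pp / Pn" unfolding G Rw by simp
  finally have PD: "(\<Prod>i\<in>{1..n}. dd i r powi mu i) = r ^ nat (mu 0) * Pp / Pn" .
  have E: "eliminant n l a b mu r = r ^ nat (mu 0) * Pp - Pn"
    unfolding eliminant_def Pp_def Pn_def g_def by simp
  show ?thesis unfolding PD E using Pn0 by (auto simp: field_simps)
qed

lemma rec_char:
  assumes nz: "\<forall>i\<in>{1..n}. dd i r \<noteq> 0"
  shows "(\<Prod>i\<in>{1..n}. dd i r powi mu i) = 1 \<longleftrightarrow>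
         ((\<Sum>i\<in>{1..n}. of_int (mu i) * ln \<bar>dd i r\<bar>) = 0 \<and> (\<Prod>i\<in>{1..n}. dd i r powi mu i) > 0)"
proof -
  let ?P = "\<Prod>i\<in>{1..n}. dd i r powi mu i"
  have abs: "\<bar>?P\<bar> = (\<Prod>i\<in>{1..n}. \<bar>dd i r\<bar> powi mu i)" by (simp add: abs_prod power_int_abs)
  have lnA: "ln (\<Prod>i\<in>{1..n}. \<bar>dd i r\<bar> powi mu i) = (\<Sum>i\<in>{1..n}. of_int (mu i) * ln \<bar>dd i r\<bar>)"
    using ln_prod_powi[of "{1..n}" "\<lambda>i. \<bar>dd i r\<bar>" mu] nz by simp
  have Apos: "(\<Prod>i\<in>{1..n}. \<bar>dd i r\<bar> powi mu i) > 0" using prod_abs_pos[of "{1..n}" "\<lambda>i. dd i r" mu] nz by simp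
  show ?thesis
  proof
    assume h: "?P = 1"
    hence "(\<Prod>i\<in>{1..n}. \<bar>dd i r\<bar> powi mu i) = 1" using abs by simp
    thus "(\<Sum>i\<in>{1..n}. of_int (mu i) * ln \<bar>dd i r\<bar>) = 0 \<and> ?P > 0" using lnA h by simp
  next
    assume h: "(\<Sum>i\<in>{1..n}. of_int (mu i) * ln \<bar>dd i r\<bar>) = 0 \<and> ?P > 0"
    hence "ln (\<Prod>i\<in>{1..n}. \<bar>dd i r\<bar> powi mu i) = 0" using lnA by simp
    hence "(\<Prod>i\<in>{1..n}. \<bar>dd i r\<bar> powi mu i) = 1" using Apos by simp
    thus "?P = 1" using abs h by simp
  qed
qed

lemma mu_comb:
  assumes "\<forall>i\<in>{1..n}. (\<Sum>q<m. of_int (w i (q+2)) * Y q) = (\<beta> i :: real)"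
  shows "(\<Sum>i\<in>{1..n}. of_int (mu i) * \<beta> i) = 0"
proof -
  have "(\<Sum>i\<in>{1..n}. of_int (mu i) * \<beta> i) = (\<Sum>i\<in>{1..n}. of_int (mu i) * (\<Sum>q<m. of_int (w i (q+2)) * Y q))"
    using assms by simp
  also have "\<dots> = (\<Sum>q<m. Y q * of_int (\<Sum>i\<in>{1..n}. mu i * w i (q+2)))"
    by (simp add: sum_distrib_left sum_distrib_right mult_ac, rule sum.swap)
  also have "\<dots> = 0" using relv by simp
  finally show ?thesis .
qed

definition Xs where "Xs = {x :: nat \<Rightarrow> real. (\<forall>j. j \<notin> {1..n} \<longrightarrow> x j = 0) \<and> (\<forall>j\<in>{1..n}. x j \<noteq> 0) \<and>
                (\<forall>i\<in>{1..n}. monom_int n (w i) x = gpol l (a i) (b i) (x 1))}"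
definition Rs where "Rs = {r :: real. r \<noteq> 0 \<and> eliminant n l a b mu r = 0 \<and>
                (\<forall>eps :: nat \<Rightarrow> int.
                   Bbar n w *\<^sub>v vec n (\<lambda>i. of_int (eps (i + 1))) = 0\<^sub>v (n - 1) \<longrightarrow>
                   (\<Prod>i\<in>{1..n}. (gpol l (a i) (b i) r / r powi (w i 1)) powi (eps i)) > 0)}"

lemma X_nz: "x \<in> Xs \<Longrightarrow> x 1 \<noteq> 0 \<and> (\<forall>q<m. x (q+2) \<noteq> 0)"
proof -
  assume x: "x \<in> Xs"
  have "1 \<in> {1..n}" using n_pos by simp
  moreover have "\<forall>q<m. q + 2 \<in> {1..n}" using nm by auto
  ultimately show ?thesis using x unfolding Xs_def by blast
qed

lemma X_to_R: assumes x: "x \<in> Xs" shows "x 1 \<in> Rs"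
proof -
  define r where "r = x 1"
  have r: "r \<noteq> 0" and xq: "\<forall>q<m. x (q+2) \<noteq> 0" using X_nz[OF x] unfolding r_def by auto
  have eqs: "\<forall>i\<in>{1..n}. monom_int n (w i) x = gpol l (a i) (b i) r" using x unfolding Xs_def r_def by blast
  have ch: "(\<forall>i\<in>{1..n}. dd i r \<noteq> 0) \<and> (Bbar n w)\<^sup>T *\<^sub>v sv x = sig r \<and>
    (\<forall>i\<in>{1..n}. (\<Sum>q<m. of_int (w i (q+2)) * ln \<bar>x (q+2)\<bar>) = ln \<bar>dd i r\<bar>)"
    using sys_char[OF r r_def[symmetric] xq] eqs by blast
  hence nz: "\<forall>i\<in>{1..n}. dd i r \<noteq> 0" by blast
  have perp: "\<forall>e\<in>carrier_vec n. Bbar n w *\<^sub>v e = 0\<^sub>v m \<longrightarrow> sig r \<bullet> e = 0"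
    using G2[OF Bc sig_carrier] ch sv_carrier by blast
  have epsL: "\<forall>eps. Bbar n w *\<^sub>v vec n (\<lambda>i. of_int (eps (i + 1))) = 0\<^sub>v (n - 1) \<longrightarrow>
            (\<Prod>i\<in>{1..n}. (gpol l (a i) (b i) r / r powi (w i 1)) powi (eps i)) > 0"
    using eps_char[OF r] nz perp by blast
  have ppos: "(\<Prod>i\<in>{1..n}. dd i r powi mu i) > 0"
    using epsL mu_ker unfolding dd_def n1 by blast
  have "(\<Sum>i\<in>{1..n}. of_int (mu i) * ln \<bar>dd i r\<bar>) = 0"
    using mu_comb[of "\<lambda>q. ln \<bar>x (q+2)\<bar>" "\<lambda>i. ln \<bar>dd i r\<bar>"] ch by blast
  hence "(\<Prod>i\<in>{1..n}. dd i r powi mu i) = 1" using rec_char[OF nz] ppos by blast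
  hence "eliminant n l a b mu r = 0" using elim_char[OF r nz] by blast
  thus ?thesis using r epsL unfolding Rs_def r_def by blast
qed

end

context sys begin

lemma fiber_card:
  assumes rR: "r \<in> Rs"
  shows "card {x\<in>Xs. x 1 = r} = 2 ^ (m - vec_space.rank m (Bbar n w))"
proof -
  have r: "r \<noteq> 0" and el: "eliminant n l a b mu r = 0"
    and epsL: "\<forall>eps. Bbar n w *\<^sub>v vec n (\<lambda>i. of_int (eps (i + 1))) = 0\<^sub>v (n - 1) \<longrightarrow>
            (\<Prod>i\<in>{1..n}. (gpol l (a i) (b i) r / r powi (w i 1)) powi (eps i)) > 0"
    using rR unfolding Rs_def by auto
  have nz: "\<forall>i\<in>{1..n}. dd i r \<noteq> 0" and perp: "\<forall>e\<in>carrier_vec n. Bbar n w *\<^sub>v e = 0\<^sub>v m \<longrightarrow> sig r \<bullet> e = 0"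
    using eps_char[OF r] epsL by blast+
  obtain s0 where s0: "s0 \<in> carrier_vec m" "(Bbar n w)\<^sup>T *\<^sub>v s0 = sig r"
    using G2[OF Bc sig_carrier] perp by blast
  have "(\<Prod>i\<in>{1..n}. dd i r powi mu i) = 1" using elim_char[OF r nz] el by blast
  hence "(\<Sum>i\<in>{1..n}. of_int (mu i) * ln \<bar>dd i r\<bar>) = 0" using rec_char[OF nz] by blast
  then obtain Y where Y: "\<forall>i\<in>{1..n}. (\<Sum>q<m. of_int (w i (q+2)) * Y q) = ln \<bar>dd i r\<bar>"
    using R2[OF circ nm relv munz, of "\<lambda>i. ln \<bar>dd i r\<bar>"] by blast
  define S where "S = {s \<in> carrier_vec m. (Bbar n w)\<^sup>T *\<^sub>v s = sig r}"
  have cS: "card S = 2 ^ (m - vec_space.rank m (Bbar n w))"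
    unfolding S_def using G3[OF Bc s0(1)] G1[OF Bc] s0(2) by simp
  define F where "F = {x\<in>Xs. x 1 = r}"
  define xs where "xs s = (\<lambda>j. if j = 1 then r else if 2 \<le> j \<and> j \<le> n then rs (s $ (j-2)) * exp (Y (j-2)) else 0)" for s
  have xs_q: "xs s (q+2) = rs (s $ q) * exp (Y q)" if "q < m" for s q
    using that nm unfolding xs_def by auto
  have xs_nz: "\<forall>q<m. xs s (q+2) \<noteq> 0" for s
    using xs_q by (auto simp: rs_def)
  have sv_xs: "sv (xs s) = s" if "s \<in> carrier_vec m" for s
  proof (rule eq_vecI)
    fix q assume "q < dim_vec s"
    hence q: "q < m" using that by simp
    show "sv (xs s) $ q = s $ q" unfolding sv_def using q xs_q[OF q] ng_rs[of "exp (Y q)"] by simp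
  qed (use that in \<open>simp add: sv_def\<close>)
  have ln_xs: "ln \<bar>xs s (q+2)\<bar> = Y q" if "q < m" for s q
    using xs_q[OF that] by (simp add: rs_def abs_mult)
  have img1: "xs ` S \<subseteq> F"
  proof
    fix x assume "x \<in> xs ` S"
    then obtain s where s: "s \<in> S" and xdef: "x = xs s" by blast
    have sc: "s \<in> carrier_vec m" using s unfolding S_def by simp
    have x1: "x 1 = r" unfolding xdef xs_def by simp
    have supp: "\<forall>j. j \<notin> {1..n} \<longrightarrow> x j = 0" unfolding xdef xs_def using n_pos by auto
    have nzx: "\<forall>j\<in>{1..n}. x j \<noteq> 0"
    proof
      fix j assume j: "j \<in> {1..n}"
      show "x j \<noteq> 0"
      proof (cases "j = 1")
        case True thus ?thesis using x1 r by simp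
      next
        case False
        hence "j = (j - 2) + 2" "j - 2 < m" using j nm by auto
        thus ?thesis using xs_nz[of s] unfolding xdef by metis
      qed
    qed
    have "(\<forall>i\<in>{1..n}. monom_int n (w i) x = gpol l (a i) (b i) r)"
    proof -
      have "(Bbar n w)\<^sup>T *\<^sub>v sv x = sig r" using sv_xs[OF sc] s unfolding S_def xdef by simp
      moreover have "\<forall>i\<in>{1..n}. (\<Sum>q<m. of_int (w i (q+2)) * ln \<bar>x (q+2)\<bar>) = ln \<bar>dd i r\<bar>"
        using Y ln_xs unfolding xdef by simp
      ultimately show ?thesis using sys_char[of r x, OF r x1] xs_nz[of s] nz unfolding xdef by blast
    qed
    thus "x \<in> F" unfolding F_def Xs_def using x1 supp nzx by simp
  qed
  have img2: "sv ` F \<subseteq> S"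
  proof
    fix s assume "s \<in> sv ` F"
    then obtain x where x: "x \<in> F" and sdef: "s = sv x" by blast
    have xX: "x \<in> Xs" and x1: "x 1 = r" using x unfolding F_def by auto
    have xq: "\<forall>q<m. x (q+2) \<noteq> 0" using X_nz[OF xX] by blast
    have "\<forall>i\<in>{1..n}. monom_int n (w i) x = gpol l (a i) (b i) r" using xX x1 unfolding Xs_def by auto
    hence "(Bbar n w)\<^sup>T *\<^sub>v sv x = sig r" using sys_char[of r x, OF r x1 xq] by blast
    thus "s \<in> S" unfolding S_def sdef using sv_carrier by simp
  qed
  have inv1: "\<forall>s\<in>S. sv (xs s) = s" using sv_xs unfolding S_def by blast
  have inv2: "\<forall>x\<in>F. xs (sv x) = x"
  proof
    fix x assume x: "x \<in> F"
    have xX: "x \<in> Xs" and x1: "x 1 = r" using x unfolding F_def by auto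
    have xq: "\<forall>q<m. x (q+2) \<noteq> 0" using X_nz[OF xX] by blast
    have "\<forall>i\<in>{1..n}. monom_int n (w i) x = gpol l (a i) (b i) r" using xX x1 unfolding Xs_def by auto
    hence lnx: "\<forall>i\<in>{1..n}. (\<Sum>q<m. of_int (w i (q+2)) * ln \<bar>x (q+2)\<bar>) = ln \<bar>dd i r\<bar>"
      using sys_char[of r x, OF r x1 xq] by blast
    have "\<forall>i\<in>{1..n}. (\<Sum>q<m. of_int (w i (q+2)) * (ln \<bar>x (q+2)\<bar> - Y q)) = (0::real)"
    proof
      fix i assume i: "i \<in> {1..n}"
      have "(\<Sum>q<m. of_int (w i (q+2)) * (ln \<bar>x (q+2)\<bar> - Y q)) =
            (\<Sum>q<m. of_int (w i (q+2)) * ln \<bar>x (q+2)\<bar>) - (\<Sum>q<m. of_int (w i (q+2)) * Y q)"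
        by (simp add: right_diff_distrib sum_subtractf)
      thus "(\<Sum>q<m. of_int (w i (q+2)) * (ln \<bar>x (q+2)\<bar> - Y q)) = 0" using lnx Y i by simp
    qed
    hence YY: "\<forall>q<m. ln \<bar>x (q+2)\<bar> - Y q = 0" using R1[OF circ nm, of "\<lambda>q. ln \<bar>x (q+2)\<bar> - Y q"] by blast
    show "xs (sv x) = x"
    proof
      fix j
      show "xs (sv x) j = x j"
      proof (cases "j = 1")
        case True thus ?thesis using x1 unfolding xs_def by simp
      next
        case False
        show ?thesis
        proof (cases "2 \<le> j \<and> j \<le> n")
          case True
          define q where "q = j - 2"
          have q: "q < m" "j = q + 2" using True nm unfolding q_def by auto
          have "exp (Y q) = \<bar>x j\<bar>" using YY q xq by (metis eq_iff_diff_eq_0 exp_ln zero_less_abs_iff)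
          moreover have "sv x $ q = ng (x j)" unfolding sv_def using q by simp
          ultimately show ?thesis using xs_q[OF q(1), of "sv x"] q(2) rs_ng[of "x j"] by simp
        next
          case False
          hence "j \<notin> {1..n}" using \<open>j \<noteq> 1\<close> by auto
          thus ?thesis using xX False \<open>j \<noteq> 1\<close> unfolding Xs_def xs_def by auto
        qed
      qed
    qed
  qed
  have "bij_betw xs S F" by (rule bij_betw_byWitness[OF inv1 inv2 img1 img2])
  hence "card F = card S" by (simp add: bij_betw_same_card)
  thus ?thesis unfolding F_def cS .
qed

lemma main_count: "card Xs = 2 ^ (m - vec_space.rank m (Bbar n w)) * card Rs"
  by (rule card_fibers[where \<pi> = "\<lambda>x. x 1"]) (use X_to_R fiber_card in auto)

end

theorem proposition1p3:
  fixes n l :: nat and w :: "nat \<Rightarrow> nat \<Rightarrow> int" and a b :: "nat \<Rightarrow> real"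
    and mu :: "nat \<Rightarrow> int"
  assumes l_pos: "l > 0"
    and circ: "circuit n (circ_pts l w)"
    and ab_nz: "\<forall>i\<in>{1..n}. a i \<noteq> 0 \<and> b i \<noteq> 0"
    and no_common_root: "\<forall>i\<in>{1..n}. \<forall>k\<in>{1..n}. i \<noteq> k \<longrightarrow>
        \<not> (\<exists>z::complex. of_real (a i) + of_real (b i) * z ^ l = 0
                      \<and> of_real (a k) + of_real (b k) * z ^ l = 0)"
    and rel: "\<forall>j\<in>{1..n}. mu 0 * (if j = 1 then 1 else 0) + (\<Sum>i\<in>{1..n}. mu i * w i j) = 0"
    and prim: "Gcd (mu ` {0..n}) = 1"
    and mu0: "mu 0 \<ge> 0"
  shows "card {x :: nat \<Rightarrow> real. (\<forall>j. j \<notin> {1..n} \<longrightarrow> x j = 0) \<and> (\<forall>j\<in>{1..n}. x j \<noteq> 0) \<and>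
                (\<forall>i\<in>{1..n}. monom_int n (w i) x = gpol l (a i) (b i) (x 1))}
       = 2 ^ (n - 1 - rank2 (n - 1) (Bbar n w)) *
         card {r :: real. r \<noteq> 0 \<and> eliminant n l a b mu r = 0 \<and>
                (\<forall>eps :: nat \<Rightarrow> int.
                   Bbar n w *\<^sub>v vec n (\<lambda>i. of_int (eps (i + 1))) = 0\<^sub>v (n - 1) \<longrightarrow>
                   (\<Prod>i\<in>{1..n}. (gpol l (a i) (b i) r / r powi (w i 1)) powi (eps i)) > 0)}"
proof -
  have "n \<ge> 1" by (rule circuit_n_pos[OF circ])
  hence nm: "n = Suc (n - 1)" by simp
  interpret S: sys n "n - 1" l w a b mu
    using circ rel prim mu0 nm by unfold_locales
  show ?thesis using S.main_count unfolding S.Xs_def S.Rs_def rank2_def .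
qed

end
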